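(* Let $n,t,t'$ be positive integers with $n\ge 2t(t+1)$ and $t'\log n\ge 4t\log t$, and let $m\ge 0$ be an integer. Then there exist a map $\mathcal{E}_b:\mathcal{S}_n\to\mathcal{S}_{n+t'+1}$ and a decoding map $\mathcal{D}$ such that for every $\sigma\in\mathcal{S}_n$ and every sequence $\pi_e$ obtained from $\pi=\mathcal{E}_b(\sigma)$ by a burst of stuck-at errors of length at most $t$ with threshold $m$ (as defined in the context), we have $\mathcal{D}(\pi_e)=\sigma$.
   Context: $\mathcal{S}_N$ denotes the set of permutations $\pi=(\pi(1),\ldots,\pi(N))$ of $[N]=\{1,\ldots,N\}$. Burst of stuck-at errors of length at most $t$ with threshold $m$: a sequence $\pi_e\in[N]^N$ is obtained from $\pi\in\mathcal{S}_N$ by such an error if there exist $j\in[N]$, $t_1\in[t]$ and positions $i_1,\ldots,i_{t_1}$ with $\pi(i_\ell)=j+\ell-1$ and $\pi(i_\ell)>m$ for all $\ell\in[t_1]$, such that $\pi_e(i_\ell)=j$ for all $\ell\in[t_1]$ and $\pi_e(i)=\pi(i)$ for $i\notin\{i_1,\ldots,i_{t_1}\}$. Logarithms are to a common base. *)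

theory Defs
  imports Complex_Main
begin

text \<open>Permutations of [N] = {1..N}, written as lists of length N
  (list index k corresponds to position k+1).\<close>
definition perms :: "nat \<Rightarrow> nat list set" where
  "perms N = {p. length p = N \<and> set p = {1..N}}"

definition stuck_burst :: "nat \<Rightarrow> nat \<Rightarrow> nat list \<Rightarrow> nat list \<Rightarrow> bool" where
  "stuck_burst t m p pe \<longleftrightarrow>
     length pe = length p \<and>
     (\<exists>j t1 (idx :: nat \<Rightarrow> nat).
        1 \<le> j \<and> j \<le> length p \<and> 1 \<le> t1 \<and> t1 \<le> t \<and>
        (\<forall>l\<in>{1..t1}. idx l < length p \<and> p ! (idx l) = j + l - 1 \<and> p ! (idx l) > m) \<and>
        (\<forall>l\<in>{1..t1}. pe ! (idx l) = j) \<and>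
        (\<forall>i<length p. i \<notin> idx ` {1..t1} \<longrightarrow> pe ! i = p ! i))"

end

theory Submission
  imports Defs "HOL-Combinatorics.Multiset_Permutations" "HOL-Library.FuncSet"
begin


lemma perms_distinct: "p \<in> perms N \<Longrightarrow> distinct p \<and> length p = N"
proof -
  assume "p \<in> perms N"
  then have l: "length p = N" and s: "set p = {1..N}" by (auto simp: perms_def)
  have "card (set p) = length p" using l s by simp
  then show ?thesis using l card_distinct by blast
qed

lemma perms_eq: "perms N = permutations_of_set {1..N}"
proof
  show "perms N \<subseteq> permutations_of_set {1..N}"
    using perms_distinct unfolding permutations_of_set_def perms_def by blast
  show "permutations_of_set {1..N} \<subseteq> perms N"
  proof
    fix p assume "p \<in> permutations_of_set {1..N}"
    then have s: "set p = {1..N}" and d: "distinct p" by (auto simp: permutations_of_set_def)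
    have "length p = card (set p)" using d distinct_card by metis
    also have "\<dots> = N" using s by simp
    finally show "p \<in> perms N" using s by (simp add: perms_def)
  qed
qed

lemma card_perms: "card (perms N) = fact N"
  by (simp add: perms_eq)

lemma finite_perms: "finite (perms N)"
  by (simp add: perms_eq)

lemma greedy:
  fixes R :: "'a \<Rightarrow> 'a \<Rightarrow> bool"
  assumes "finite V" "\<And>x y. R x y = R y x" "\<And>x. x \<in> V \<Longrightarrow> card {y\<in>V. R x y} \<le> d"
  shows "\<exists>I\<subseteq>V. (\<forall>x\<in>I. \<forall>y\<in>I. x \<noteq> y \<longrightarrow> \<not> R x y) \<and> card V \<le> card I * (d+1)"
  using assms
proof (induction "card V" arbitrary: V rule: less_induct)
  case less
  show ?case
  proof (cases "V = {}")
    case True then show ?thesis by simp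
  next
    case False
    then obtain x where x: "x \<in> V" by auto
    define V' where "V' = V - insert x {y\<in>V. R x y}"
    have fin: "finite V'" using less.prems by (simp add: V'_def)
    have sub: "insert x {y\<in>V. R x y} \<subseteq> V" using x by auto
    have c1: "card V = card V' + card (insert x {y\<in>V. R x y})"
    proof -
      have fA: "finite (insert x {y\<in>V. R x y})" using less.prems(1) by simp
      have "card V' = card V - card (insert x {y\<in>V. R x y})"
        unfolding V'_def by (rule card_Diff_subset[OF fA sub])
      moreover have "card (insert x {y\<in>V. R x y}) \<le> card V"
        by (rule card_mono[OF less.prems(1) sub])
      ultimately show ?thesis by simp
    qed
    have c2: "card (insert x {y\<in>V. R x y}) \<le> d + 1"
    proof -
      have "finite {y\<in>V. R x y}" using less.prems(1) by simp
      then have "card (insert x {y\<in>V. R x y}) \<le> Suc (card {y\<in>V. R x y})"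
        by (simp add: card_insert_if)
      then show ?thesis using less.prems(3)[OF x] by simp
    qed
    have "card (insert x {y\<in>V. R x y}) > 0" using less.prems(1) by (simp add: card_gt_0_iff)
    then have lt: "card V' < card V" using c1 by simp
    have "\<And>z. z \<in> V' \<Longrightarrow> card {y\<in>V'. R z y} \<le> d"
    proof -
      fix z assume "z \<in> V'"
      then have "z \<in> V" by (simp add: V'_def)
      have "card {y\<in>V'. R z y} \<le> card {y\<in>V. R z y}"
        by (rule card_mono) (use less.prems(1) in \<open>auto simp: V'_def\<close>)
      then show "card {y\<in>V'. R z y} \<le> d" using less.prems(3)[OF \<open>z \<in> V\<close>] by simp
    qed
    from less.hyps[OF lt fin less.prems(2) this] obtain I where
      I: "I \<subseteq> V'" "\<forall>x\<in>I. \<forall>y\<in>I. x \<noteq> y \<longrightarrow> \<not> R x y" "card V' \<le> card I * (d+1)" by blast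
    have xI: "x \<notin> I" using I(1) by (auto simp: V'_def)
    have finI: "finite I" using I(1) fin finite_subset by blast
    have "insert x I \<subseteq> V" using I(1) x by (auto simp: V'_def)
    moreover have "\<forall>a\<in>insert x I. \<forall>b\<in>insert x I. a \<noteq> b \<longrightarrow> \<not> R a b"
    proof (intro ballI impI)
      fix a b assume a: "a \<in> insert x I" and b: "b \<in> insert x I" and ab: "a \<noteq> b"
      have nx: "\<forall>y\<in>I. \<not> R x y" using I(1) by (auto simp: V'_def)
      have sym: "R b a = R a b" by (rule less.prems(2))
      show "\<not> R a b"
      proof (cases "a = x")
        case True then show ?thesis using b ab nx by auto
      next
        case False
        then have aI: "a \<in> I" using a by auto
        show ?thesis
        proof (cases "b = x")
          case True then show ?thesis using aI nx sym by auto
        next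
          case False then show ?thesis using aI b ab I(2) by auto
        qed
      qed
    qed
    moreover have "card V \<le> card (insert x I) * (d+1)"
    proof -
      have e: "card (insert x I) = card I + 1" using xI finI by simp
      have "card V \<le> card I * (d+1) + (d+1)" using c1 c2 I(3) by linarith
      also have "\<dots> = (card I + 1) * (d+1)" by (simp add: algebra_simps)
      finally show ?thesis using e by simp
    qed
    ultimately show ?thesis by (intro exI[of _ "insert x I"] conjI)
  qed
qed



lemma core:
  assumes dp: "distinct p" and len: "length p' = length p"
    and sb: "stuck_burst t m p pe" and sb': "stuck_burst t m p' pe"
  shows "\<exists>j. 1 \<le> j \<and> j \<le> length p \<and> (\<forall>i<length p. (p!i \<notin> {j..<j+t} \<longrightarrow> p'!i = p!i) \<and> (p!i \<in> {j..<j+t} \<longrightarrow> p'!i \<in> {j..<j+t}))"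
proof -
  define L where "L = length p"
  obtain j t1 idx where h: "1\<le>j" "j\<le>L" "1\<le>t1" "t1\<le>t"
    and A: "\<forall>l\<in>{1..t1}. idx l < L \<and> p!(idx l) = j+l-1 \<and> p!(idx l) > m"
    and B: "\<forall>l\<in>{1..t1}. pe!(idx l) = j"
    and C: "\<forall>i<L. i \<notin> idx`{1..t1} \<longrightarrow> pe!i = p!i"
    using sb unfolding stuck_burst_def L_def by blast
  have L': "L = length p'" using len L_def by simp
  obtain j' t1' idx' where h': "1\<le>j'" "j'\<le>L" "1\<le>t1'" "t1'\<le>t"
    and A': "\<forall>l\<in>{1..t1'}. idx' l < L \<and> p'!(idx' l) = j'+l-1 \<and> p'!(idx' l) > m"
    and B': "\<forall>l\<in>{1..t1'}. pe!(idx' l) = j'"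
    and C': "\<forall>i<L. i \<notin> idx'`{1..t1'} \<longrightarrow> pe!i = p'!i"
    using sb' unfolding stuck_burst_def L' by blast
  have inS: "pe!i = j \<and> p!i \<in> {j..<j+t1}" if "i \<in> idx`{1..t1}" for i
    using that A B by force
  have inS': "pe!i = j' \<and> p'!i \<in> {j'..<j'+t1'}" if "i \<in> idx'`{1..t1'}" for i
    using that A' B' by force
  have F2: "i \<in> idx`{1..t1}" if "i<L" "p!i \<in> {j..<j+t1}" for i
  proof -
    define l where "l = p!i - j + 1"
    have l: "l \<in> {1..t1}" using that by (auto simp: l_def)
    then have "p!(idx l) = p!i" "idx l < L" using A that(2) by (auto simp: l_def)
    then have "idx l = i" using dp that(1) nth_eq_iff_index_eq L_def by metis
    then show ?thesis using l by blast
  qed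
  have a: "p'!i = p!i" if "i<L" "p!i \<notin> {j..<j+t1}" for i
  proof -
    have nS: "i \<notin> idx`{1..t1}" using inS that(2) by blast
    then have pei: "pe!i = p!i" using C that(1) by blast
    show ?thesis
    proof (cases "i \<in> idx'`{1..t1'}")
      case False
      then show ?thesis using C' that(1) pei by auto
    next
      case True
      then have pj: "p!i = j'" using inS' pei by auto
      define i0 where "i0 = idx' 1"
      have i0: "i0 < L" "p'!i0 = j'" "pe!i0 = j'" using A' B' h'(3) by (auto simp: i0_def)
      show ?thesis
      proof (cases "i0 = i")
        case True then show ?thesis using i0 pj by simp
      next
        case ne: False
        show ?thesis
        proof (cases "i0 \<in> idx`{1..t1}")
          case True
          then have "j = j'" using inS i0 by auto
          then have False using pj that(2) h(3) by auto
          then show ?thesis ..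
        next
          case False
          then have "p!i0 = p!i" using C i0 pj by auto
          then have "i0 = i" using dp i0(1) that(1) nth_eq_iff_index_eq L_def by metis
          then show ?thesis using ne by simp
        qed
      qed
    qed
  qed
  have b: "p'!i \<in> {j..<j+t}" if "i<L" "p!i \<in> {j..<j+t1}" for i
  proof -
    have S: "i \<in> idx`{1..t1}" using F2 that by blast
    then have pei: "pe!i = j" using inS by blast
    show ?thesis
    proof (cases "i \<in> idx'`{1..t1'}")
      case True
      from inS'[OF True] have "pe!i = j'" "p'!i \<in> {j'..<j'+t1'}" by auto
      then show ?thesis using pei h'(4) by auto
    next
      case False
      then show ?thesis using C' that(1) pei h(3) h(4) by auto
    qed
  qed
  have "\<forall>i<length p. (p!i \<notin> {j..<j+t} \<longrightarrow> p'!i = p!i) \<and> (p!i \<in> {j..<j+t} \<longrightarrow> p'!i \<in> {j..<j+t})"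
  proof (intro allI impI conjI)
    fix i assume i: "i < length p"
    show "p'!i = p!i" if "p!i \<notin> {j..<j+t}" using a[of i] i that h(4) L_def by auto
    show "p'!i \<in> {j..<j+t}" if "p!i \<in> {j..<j+t}"
    proof (cases "p!i \<in> {j..<j+t1}")
      case True then show ?thesis using b i L_def by blast
    next
      case False then show ?thesis using a[of i] i that L_def by auto
    qed
  qed
  then show ?thesis using h L_def by blast
qed



lemma fact_bound: "fact n * n^k * (n+k+1) \<le> (fact (n+k+1) :: nat)"
proof (induction k)
  case 0 then show ?case by (simp add: fact_Suc algebra_simps)
next
  case (Suc k)
  have "fact n * n^(Suc k) * (n + Suc k + 1) = (fact n * n^k * n) * (n+k+2)" by (simp add: algebra_simps)
  also have "\<dots> \<le> (fact n * n^k * (n+k+1)) * (n+k+2)"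
    by (intro mult_le_mono mult_le_mono2) auto
  also have "\<dots> \<le> fact (n+k+1) * (n+k+2)" using Suc.IH by (intro mult_le_mono1)
  also have "\<dots> = fact (n + Suc k + 1)"
  proof -
    have e: "n + Suc k + 1 = Suc (n+k+1)" by simp
    show ?thesis unfolding e fact_Suc by simp
  qed
  finally show ?case .
qed

lemma pow_bound:
  fixes n t t' :: nat
  assumes "n > 0" "t > 0" "t' > 0" "n \<ge> 2 * t * (t + 1)"
    and "real t' * ln (real n) \<ge> 4 * real t * ln (real t)"
  shows "t^t + 1 \<le> n^t'"
proof (cases "t = 1")
  case True
  have "n \<ge> 4" using assms(4) True by simp
  moreover have "n \<le> n^t'" using assms(1,3) by (simp add: self_le_power)
  ultimately show ?thesis using True by simp
next
  case False
  then have t2: "t \<ge> 2" using assms(2) by simp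
  have "ln (real t ^ (4*t)) = real (4*t) * ln (real t)" using assms(2) by (simp add: ln_realpow)
  also have "\<dots> \<le> real t' * ln (real n)" using assms(5) by simp
  also have "\<dots> = ln (real n ^ t')" using assms(1) by (simp add: ln_realpow)
  finally have "real t ^ (4*t) \<le> real n ^ t'"
    using assms(1,2) by (subst (asm) ln_le_cancel_iff) auto
  then have A: "t ^ (4*t) \<le> n ^ t'" by (metis of_nat_le_iff of_nat_power)
  have "t^(3*t) \<ge> 2" 
  proof -
    have "t^(3*t) \<ge> t^1" using t2 by (intro power_increasing) auto
    then show ?thesis using t2 by simp
  qed
  moreover have "t^t \<ge> 1" using assms(2) by simp
  ultimately have "t^t + 1 \<le> t^t * 2" by simp
  also have "\<dots> \<le> t^t * t^(3*t)" using \<open>t^(3*t) \<ge> 2\<close> by (rule mult_le_mono2)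
  also have "\<dots> = t^(4*t)" by (simp add: power_add[symmetric])
  finally show ?thesis using A by simp
qed



definition conf :: "nat \<Rightarrow> nat \<Rightarrow> nat list \<Rightarrow> nat list \<Rightarrow> bool" where
  "conf t m p q \<longleftrightarrow> p \<noteq> q \<and> (\<exists>pe. stuck_burst t m p pe \<and> stuck_burst t m q pe)"

lemma conf_sym: "conf t m p q = conf t m q p"
  unfolding conf_def by blast

definition gmap :: "nat \<Rightarrow> nat \<Rightarrow> nat list \<Rightarrow> (nat \<Rightarrow> nat) \<Rightarrow> nat list" where
  "gmap t j p f = map (\<lambda>v. if v \<in> {j..<j+t} then f v else v) p"

lemma neighbor_in:
  assumes p: "p \<in> perms N" and q: "q \<in> perms N" and c: "conf t m p q"
  shows "q \<in> (\<Union>j\<in>{1..N}. gmap t j p ` ({j..<j+t} \<rightarrow>\<^sub>E {j..<j+t}))"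
proof -
  have dp: "distinct p" and lp: "length p = N" using perms_distinct[OF p] by auto
  have lq: "length q = N" using perms_distinct[OF q] by auto
  obtain pe where sb: "stuck_burst t m p pe" "stuck_burst t m q pe" using c conf_def by blast
  have lqp: "length q = length p" using lp lq by simp
  obtain j where j: "1 \<le> j" "j \<le> length p"
    and P: "\<forall>i<length p. (p!i \<notin> {j..<j+t} \<longrightarrow> q!i = p!i) \<and> (p!i \<in> {j..<j+t} \<longrightarrow> q!i \<in> {j..<j+t})"
    using core[OF dp lqp sb(1) sb(2)] by blast
  define W where "W = {j..<j+t}"
  define f where "f = restrict (\<lambda>v. if v \<in> set p then q ! (THE i. i < N \<and> p!i = v) else v) W"
  have the_i: "(THE i'. i' < N \<and> p!i' = p!i) = i" if "i < N" for i
  proof (rule the_equality)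
    show "i < N \<and> p!i = p!i" using that by simp
    fix i' assume "i' < N \<and> p!i' = p!i"
    then show "i' = i" using dp that lp nth_eq_iff_index_eq by metis
  qed
  have fW: "f \<in> W \<rightarrow>\<^sub>E W"
  proof
    fix v assume v: "v \<in> W"
    show "f v \<in> W"
    proof (cases "v \<in> set p")
      case True
      then obtain i where i: "i < N" "p!i = v" using lp by (auto simp: in_set_conv_nth)
      have "f v = q ! i" using v True the_i[OF i(1)] i(2) by (simp add: f_def)
      then show ?thesis using P i v lp W_def by auto
    qed (use v in \<open>simp add: f_def\<close>)
  next
    fix v assume "v \<notin> W" then show "f v = undefined" by (simp add: f_def)
  qed
  have "q = gmap t j p f"
  proof (rule nth_equalityI)
    show "length q = length (gmap t j p f)" using lp lq by (simp add: gmap_def)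
    fix i assume "i < length q"
    then have i: "i < N" using lq by simp
    show "q ! i = gmap t j p f ! i"
    proof (cases "p!i \<in> W")
      case True
      have "p!i \<in> set p" using i lp by simp
      then have "f (p!i) = q ! i" using True the_i[OF i] by (simp add: f_def)
      then show ?thesis using True i lp by (simp add: gmap_def W_def)
    next
      case False
      then have nW: "p!i \<notin> {j..<j+t}" by (simp add: W_def)
      then have "q!i = p!i" using P i lp by blast
      moreover have "gmap t j p f ! i = p!i"
      proof -
        have il: "i < length p" using i lp by simp
        have "gmap t j p f ! i = (if p!i \<in> {j..<j+t} then f (p!i) else p!i)"
          unfolding gmap_def by (rule nth_map[OF il])
        also have "\<dots> = p!i" by (rule if_not_P[OF nW])
        finally show ?thesis .
      qed
      ultimately show ?thesis by simp
    qed
  qed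
  then have "q \<in> gmap t j p ` ({j..<j+t} \<rightarrow>\<^sub>E {j..<j+t})"
    using fW unfolding W_def by (intro rev_image_eqI)
  moreover have "j \<in> {1..N}" using j lp by simp
  ultimately show ?thesis by (rule UN_I[rotated])
qed

lemma neighbor_card:
  assumes p: "p \<in> perms N"
  shows "card {q\<in>perms N. conf t m p q} \<le> N * t^t"
proof -
  have "card {q\<in>perms N. conf t m p q} \<le> card (\<Union>j\<in>{1..N}. gmap t j p ` ({j..<j+t} \<rightarrow>\<^sub>E {j..<j+t}))"
  proof (rule card_mono)
    show "finite (\<Union>j\<in>{1..N}. gmap t j p ` ({j..<j+t} \<rightarrow>\<^sub>E {j..<j+t}))"
      by (intro finite_UN_I finite_imageI finite_PiE) auto
    show "{q\<in>perms N. conf t m p q} \<subseteq> (\<Union>j\<in>{1..N}. gmap t j p ` ({j..<j+t} \<rightarrow>\<^sub>E {j..<j+t}))"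
      using neighbor_in[OF p] by blast
  qed
  also have "\<dots> \<le> (\<Sum>j\<in>{1..N}. card (gmap t j p ` ({j..<j+t} \<rightarrow>\<^sub>E {j..<j+t})))"
    by (rule card_UN_le) simp
  also have "\<dots> \<le> (\<Sum>j\<in>{1..N}. t^t)"
  proof (rule sum_mono)
    fix j
    have "card (gmap t j p ` ({j..<j+t} \<rightarrow>\<^sub>E {j..<j+t})) \<le> card ({j..<j+t} \<rightarrow>\<^sub>E {j..<j+t})"
      by (rule card_image_le) (intro finite_PiE; simp)
    also have "\<dots> = t^t" by (simp add: card_funcsetE)
    finally show "card (gmap t j p ` ({j..<j+t} \<rightarrow>\<^sub>E {j..<j+t})) \<le> t^t" .
  qed
  also have "\<dots> = N * t^t" by simp
  finally show ?thesis .
qed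



theorem theorem2:
  fixes n t t' m :: nat
  assumes "n > 0" "t > 0" "t' > 0"
    and "n \<ge> 2 * t * (t + 1)"
    and "real t' * ln (real n) \<ge> 4 * real t * ln (real t)"
  shows "\<exists>(Eb :: nat list \<Rightarrow> nat list) (D :: nat list \<Rightarrow> nat list).
           (\<forall>\<sigma>\<in>perms n. Eb \<sigma> \<in> perms (n + t' + 1)) \<and>
           (\<forall>\<sigma>\<in>perms n. \<forall>pe. stuck_burst t m (Eb \<sigma>) pe \<longrightarrow> D pe = \<sigma>)"
proof -
  define N where "N = n + t' + 1"
  define d where "d = N * t^t"
  have "\<exists>I\<subseteq>perms N. (\<forall>x\<in>I. \<forall>y\<in>I. x \<noteq> y \<longrightarrow> \<not> conf t m x y) \<and> card (perms N) \<le> card I * (d+1)"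
  proof (rule greedy)
    show "finite (perms N)" by (rule finite_perms)
    show "\<And>x y. conf t m x y = conf t m y x" by (rule conf_sym)
    show "\<And>x. x \<in> perms N \<Longrightarrow> card {y \<in> perms N. conf t m x y} \<le> d"
      unfolding d_def by (rule neighbor_card)
  qed
  then obtain I where I: "I \<subseteq> perms N" "\<forall>x\<in>I. \<forall>y\<in>I. x \<noteq> y \<longrightarrow> \<not> conf t m x y"
    "card (perms N) \<le> card I * (d+1)" by blast
  have pb: "t^t + 1 \<le> n^t'" by (rule pow_bound[OF assms])
  have "fact n * (d+1) \<le> fact n * (N * n^t')"
  proof (rule mult_le_mono2)
    have "d + 1 \<le> N * t^t + N" unfolding d_def N_def by simp
    also have "\<dots> = N * (t^t + 1)" by (simp add: algebra_simps)
    also have "\<dots> \<le> N * n^t'" using pb by (rule mult_le_mono2)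
    finally show "d + 1 \<le> N * n^t'" .
  qed
  also have "\<dots> = fact n * n^t' * (n+t'+1)" unfolding N_def by (simp add: algebra_simps)
  also have "\<dots> \<le> fact (n+t'+1)" by (rule fact_bound)
  also have "\<dots> = card (perms N)" unfolding N_def by (simp add: card_perms)
  also have "\<dots> \<le> card I * (d+1)" by (rule I(3))
  finally have fi: "fact n * (d+1) \<le> card I * (d+1)" .
  have "fact n \<le> card I"
  proof (rule ccontr)
    assume "\<not> fact n \<le> card I"
    then have "card I < fact n" by simp
    then have "card I * (d+1) < fact n * (d+1)" by (rule mult_less_mono1) simp
    then show False using fi by simp
  qed
  then have "card (perms n) \<le> card I" by (simp add: card_perms)
  moreover have "finite I" using I(1) finite_perms finite_subset by blast
  ultimately obtain Eb where Eb: "Eb ` perms n \<subseteq> I" "inj_on Eb (perms n)"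
    using card_le_inj[OF finite_perms] by blast
  define D where "D pe = (SOME \<sigma>. \<sigma> \<in> perms n \<and> stuck_burst t m (Eb \<sigma>) pe)" for pe
  have "\<forall>\<sigma>\<in>perms n. Eb \<sigma> \<in> perms (n + t' + 1)" using Eb(1) I(1) N_def by blast
  moreover have "\<forall>\<sigma>\<in>perms n. \<forall>pe. stuck_burst t m (Eb \<sigma>) pe \<longrightarrow> D pe = \<sigma>"
  proof (intro ballI allI impI)
    fix \<sigma> pe assume s: "\<sigma> \<in> perms n" and sb: "stuck_burst t m (Eb \<sigma>) pe"
    have "\<exists>x. x \<in> perms n \<and> stuck_burst t m (Eb x) pe" using s sb by blast
    then have s2: "D pe \<in> perms n \<and> stuck_burst t m (Eb (D pe)) pe"
      unfolding D_def by (rule someI_ex)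
    have "Eb (D pe) = Eb \<sigma>"
    proof (rule ccontr)
      assume ne: "Eb (D pe) \<noteq> Eb \<sigma>"
      then have "conf t m (Eb (D pe)) (Eb \<sigma>)" unfolding conf_def using s2 sb by blast
      moreover have "Eb (D pe) \<in> I" "Eb \<sigma> \<in> I" using Eb(1) s s2 by auto
      ultimately show False using I(2) ne by blast
    qed
    then show "D pe = \<sigma>" using Eb(2) s s2 inj_on_def by metis
  qed
  ultimately show ?thesis by blast
qed


end
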